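(* Let $G=(V,E)$ be a finite simple undirected graph with $|V|=n\ge 1$ and adjacency matrix $A$. Let $\lambda_1\ge\dots\ge\lambda_n$ be the eigenvalues of $A$ (listed with multiplicity), fix an orthonormal basis of $\mathbb{R}^n$ consisting of eigenvectors of $A$ (the $j$-th eigenvector having eigenvalue $\lambda_j$), and let $\mu_1,\dots,\mu_n$ be the coordinates of the all-ones vector $\mathbf{1}_n$ with respect to this basis. Let $k\ge 1$ and let $$f(\mathbf{x})=\sum_{\alpha\in\mathbb{N}^k} c_\alpha\, x_1^{\alpha_1}\cdots x_k^{\alpha_k}\in\mathbb{R}[x_1,\dots,x_k],$$ with $c_\alpha\in\mathbb{R}$ and $c_\alpha=0$ for all but finitely many $\alpha$. Then there are numbers $\gamma(i_1,\dots,i_k)>0$ such that $$\sum_{\alpha\in\mathbb{N}^k} c_\alpha\, w_{\alpha_1}\cdots w_{\alpha_k}=\sum_{1\le i_1\le\dots\le i_k\le n}\gamma(i_1,\dots,i_k)\, f_{\mathrm{sym}}(\lambda_{i_1},\dots,\lambda_{i_k})\,\mu_{i_1}^2\cdots\mu_{i_k}^2 .$$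
   Context: $\mathbb{N}$ denotes the nonnegative integers. For $j\in\mathbb{N}$, $w_j=w_j(G)$ denotes the total number of walks of length $j$ in $G$ (a walk is a sequence of vertices in which consecutive vertices are adjacent; vertices and edges may repeat; the length is the number of edges), so $w_0=n$ and $w_j=\mathbf{1}_n^T A^j\mathbf{1}_n$. For a polynomial $f\in\mathbb{R}[x_1,\dots,x_k]$, its symmetrization is $f_{\mathrm{sym}}(\mathbf{x})=\sum_{\sigma\in S_k} f(x_{\sigma(1)},\dots,x_{\sigma(k)})$. *)

theory Defs
  imports Complex_Main "HOL-Combinatorics.Permutations"
begin

definition simple_graph :: "nat \<Rightarrow> (nat \<Rightarrow> nat \<Rightarrow> bool) \<Rightarrow> bool" where
  "simple_graph n E \<longleftrightarrow> (\<forall>i<n. \<forall>j<n. E i j \<longleftrightarrow> E j i) \<and> (\<forall>i<n. \<not> E i i)"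

definition adj :: "(nat \<Rightarrow> nat \<Rightarrow> bool) \<Rightarrow> nat \<Rightarrow> nat \<Rightarrow> real" where
  "adj E i j = (if E i j then 1 else 0)"

definition walks :: "nat \<Rightarrow> (nat \<Rightarrow> nat \<Rightarrow> bool) \<Rightarrow> nat \<Rightarrow> nat" where
  "walks n E j = card {xs. length xs = Suc j \<and> set xs \<subseteq> {..<n} \<and>
                          (\<forall>i<j. E (xs ! i) (xs ! Suc i))}"

text \<open>Polynomial in k variables with coefficient function c on exponent vectors
  (lists of length k), evaluated at x (variables x 0, ..., x (k-1)).\<close>
definition poly_eval :: "nat \<Rightarrow> (nat list \<Rightarrow> real) \<Rightarrow> (nat \<Rightarrow> real) \<Rightarrow> real" where
  "poly_eval k c x = (\<Sum>\<alpha>\<in>{\<alpha>. length \<alpha> = k \<and> c \<alpha> \<noteq> 0}. c \<alpha> * (\<Prod>i<k. x i ^ (\<alpha> ! i)))"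

definition poly_sym :: "nat \<Rightarrow> (nat list \<Rightarrow> real) \<Rightarrow> (nat \<Rightarrow> real) \<Rightarrow> real" where
  "poly_sym k c x = (\<Sum>\<sigma>\<in>{\<sigma>. \<sigma> permutes {..<k}}. poly_eval k c (\<lambda>i. x (\<sigma> i)))"

end

theory Submission imports Defs begin

definition Wf :: "nat \<Rightarrow> (nat \<Rightarrow> nat \<Rightarrow> bool) \<Rightarrow> nat \<Rightarrow> nat \<Rightarrow> nat list set" where
  "Wf n E m a = {xs. length xs = Suc m \<and> set xs \<subseteq> {..<n} \<and>
                          (\<forall>i<m. E (xs ! i) (xs ! Suc i)) \<and> hd xs = a}"

lemma Wf_finite: "finite (Wf n E m a)"
  by (rule finite_subset[OF _ finite_lists_length_eq[of "{..<n}" "Suc m"]]) (auto simp: Wf_def)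

lemma Wf_0: "a < n \<Longrightarrow> Wf n E 0 a = {[a]}"
  by (auto simp: Wf_def length_Suc_conv)

lemma Wf_Suc: "a < n \<Longrightarrow> Wf n E (Suc m) a = (\<Union>l\<in>{l. l<n \<and> E a l}. Cons a ` Wf n E m l)"
proof (rule set_eqI, rule iffI)
  fix xs assume "xs \<in> Wf n E (Suc m) a"
  then obtain ys where xs: "xs = a # ys" and y: "length ys = Suc m" "set ys \<subseteq> {..<n}"
     "\<forall>i<Suc m. E (xs ! i) (xs ! Suc i)"
    by (auto simp: Wf_def length_Suc_conv)
  from y(1) obtain l zs where ys: "ys = l # zs" by (cases ys) auto
  have "E a l" using y(3)[rule_format, of 0] by (simp add: xs ys)
  moreover have "l < n" using y(2) ys by auto
  moreover have "ys \<in> Wf n E m l"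
    unfolding Wf_def using y ys xs by (auto simp: All_less_Suc2)
  ultimately show "xs \<in> (\<Union>l\<in>{l. l<n \<and> E a l}. Cons a ` Wf n E m l)" using xs by blast
next
  fix xs assume "a < n" "xs \<in> (\<Union>l\<in>{l. l<n \<and> E a l}. Cons a ` Wf n E m l)"
  then obtain l ys where l: "l<n" "E a l" and ys: "ys \<in> Wf n E m l" and xs: "xs = a # ys" by auto
  from ys obtain zs where ysz: "ys = l # zs" by (cases ys) (auto simp: Wf_def)
  show "xs \<in> Wf n E (Suc m) a"
    using ys l \<open>a<n\<close> unfolding Wf_def xs
    apply (auto simp: ysz)
    by (metis less_Suc_eq_0_disj nth_Cons_0 nth_Cons_Suc)
qed


lemma Wf_disj: "l \<noteq> l' \<Longrightarrow> Wf n E m l \<inter> Wf n E m l' = {}"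
  by (auto simp: Wf_def)

lemma card_Wf_Suc: assumes "a < n"
  shows "real (card (Wf n E (Suc m) a)) = (\<Sum>l<n. adj E a l * real (card (Wf n E m l)))"
proof -
  have "card (Wf n E (Suc m) a) = (\<Sum>l\<in>{l. l<n \<and> E a l}. card (Cons a ` Wf n E m l))"
    unfolding Wf_Suc[OF assms]
    apply (rule card_UN_disjoint) apply (auto simp: Wf_finite) apply (auto simp: Wf_def) done
  also have "\<dots> = (\<Sum>l\<in>{l. l<n \<and> E a l}. card (Wf n E m l))"
    by (rule sum.cong) (auto simp: card_image)
  finally have "real (card (Wf n E (Suc m) a)) = (\<Sum>l\<in>{l\<in>{..<n}. E a l}. real (card (Wf n E m l)))"
    by simp
  also have "\<dots> = (\<Sum>l<n. adj E a l * real (card (Wf n E m l)))"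
    unfolding adj_def using sum.inter_filter[of "{..<n}" "\<lambda>l. real (card (Wf n E m l))" "E a"] by (simp del: sum.inter_filter) (rule sum.cong, auto)
  finally show ?thesis .
qed

lemma card_Wf:
  assumes eigen: "\<forall>j<n. \<forall>i<n. (\<Sum>m<n. adj E i m * v j m) = lam j * v j i"
    and coords: "\<forall>i<n. (\<Sum>j<n. \<mu> j * v j i) = 1"
  shows "a < n \<Longrightarrow> real (card (Wf n E m a)) = (\<Sum>j<n. \<mu> j * lam j ^ m * v j a)"
proof (induction m arbitrary: a)
  case 0
  then show ?case using coords by (simp add: Wf_0)
next
  case (Suc m)
  have "real (card (Wf n E (Suc m) a)) = (\<Sum>l<n. adj E a l * (\<Sum>j<n. \<mu> j * lam j ^ m * v j l))"
    using Suc by (simp add: card_Wf_Suc)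
  also have "\<dots> = (\<Sum>l<n. \<Sum>j<n. \<mu> j * lam j ^ m * (adj E a l * v j l))"
    by (simp add: sum_distrib_left mult_ac)
  also have "\<dots> = (\<Sum>j<n. \<Sum>l<n. \<mu> j * lam j ^ m * (adj E a l * v j l))"
    by (rule sum.swap)
  also have "\<dots> = (\<Sum>j<n. \<mu> j * lam j ^ m * (\<Sum>l<n. adj E a l * v j l))"
    by (simp add: sum_distrib_left)
  also have "\<dots> = (\<Sum>j<n. \<mu> j * lam j ^ Suc m * v j a)"
    using eigen Suc.prems by (intro sum.cong) auto
  finally show ?case .
qed

lemma walks_Wf: "walks n E m = (\<Sum>a<n. card (Wf n E m a))"
proof -
  have "{xs. length xs = Suc m \<and> set xs \<subseteq> {..<n} \<and> (\<forall>i<m. E (xs ! i) (xs ! Suc i))}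
     = (\<Union>a<n. Wf n E m a)"
    apply (auto simp: Wf_def)
    by (metis hd_in_set length_0_conv lessThan_iff nat.distinct(1) subset_code(1))
  then show ?thesis unfolding walks_def
    apply (simp only:) apply (rule card_UN_disjoint) apply (auto simp: Wf_finite) apply (auto simp: Wf_def) done
qed

lemma walks_spec:
  assumes orthonormal: "\<forall>j<n. \<forall>l<n. (\<Sum>i<n. v j i * v l i) = (if j = l then 1 else 0)"
    and eigen: "\<forall>j<n. \<forall>i<n. (\<Sum>m<n. adj E i m * v j m) = lam j * v j i"
    and coords: "\<forall>i<n. (\<Sum>j<n. \<mu> j * v j i) = 1"
  shows "real (walks n E m) = (\<Sum>j<n. (\<mu> j)\<^sup>2 * lam j ^ m)"
proof -
  have "real (walks n E m) = (\<Sum>a<n. (\<Sum>j'<n. \<mu> j' * v j' a) * (\<Sum>j<n. \<mu> j * lam j ^ m * v j a))"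
    using card_Wf[OF eigen coords] coords by (simp add: walks_Wf)
  also have "\<dots> = (\<Sum>a<n. \<Sum>j'<n. \<Sum>j<n. \<mu> j' * \<mu> j * lam j ^ m * (v j' a * v j a))"
    by (simp add: sum_product mult_ac)
  also have "\<dots> = (\<Sum>j'<n. \<Sum>a<n. \<Sum>j<n. \<mu> j' * \<mu> j * lam j ^ m * (v j' a * v j a))"
    by (rule sum.swap)
  also have "\<dots> = (\<Sum>j'<n. \<Sum>j<n. \<Sum>a<n. \<mu> j' * \<mu> j * lam j ^ m * (v j' a * v j a))"
    by (rule sum.cong[OF refl], rule sum.swap)
  also have "\<dots> = (\<Sum>j'<n. \<Sum>j<n. \<mu> j' * \<mu> j * lam j ^ m * (\<Sum>a<n. v j' a * v j a))"
    by (simp add: sum_distrib_left)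
  also have "\<dots> = (\<Sum>j'<n. \<Sum>j<n. if j' = j then \<mu> j' * \<mu> j * lam j ^ m else 0)"
    using orthonormal by (intro sum.cong) auto
  also have "\<dots> = (\<Sum>j<n. (\<mu> j)\<^sup>2 * lam j ^ m)"
    by (simp add: power2_eq_square)
  finally show ?thesis .
qed


lemma prod_sum_lists:
  fixes S :: "'a set" and f :: "nat \<Rightarrow> 'a \<Rightarrow> real" assumes "finite S"
  shows "(\<Sum>ms\<in>{ms. length ms = n \<and> set ms \<subseteq> S}. \<Prod>x<n. f x (ms ! x)) =
         (\<Prod>i<n. \<Sum>m\<in>S. f i m)"
proof (induct n arbitrary: f)
  case 0 then show ?case by (simp cong: conj_cong)
next
  case (Suc n)
  have *: "{ms. length ms = Suc n \<and> set ms \<subseteq> S} =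
    (\<lambda>(xs, x). x#xs) ` ({ms. length ms = n \<and> set ms \<subseteq> S} \<times> S)"
    by (auto simp: image_iff length_Suc_conv)
  have inj: "inj_on (\<lambda>(xs, x). x#xs) ({ms. length ms = n \<and> set ms \<subseteq> S} \<times> S)"
    by (auto simp: inj_on_def)
  have "(\<Sum>ms\<in>{ms. length ms = Suc n \<and> set ms \<subseteq> S}. \<Prod>x<Suc n. f x (ms ! x))
     = (\<Sum>(xs,x)\<in>{ms. length ms = n \<and> set ms \<subseteq> S} \<times> S. f 0 x * (\<Prod>i<n. f (Suc i) (xs ! i)))"
    unfolding * by (subst sum.reindex[OF inj]) (auto simp del: prod.lessThan_Suc simp: prod.lessThan_Suc_shift intro!: sum.cong)
  also have "\<dots> = (\<Sum>xs\<in>{ms. length ms = n \<and> set ms \<subseteq> S}. \<Sum>x\<in>S. f 0 x * (\<Prod>i<n. f (Suc i) (xs ! i)))"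
    by (subst sum.cartesian_product) simp
  also have "\<dots> = (\<Sum>x\<in>S. f 0 x) * (\<Prod>i<n. \<Sum>m\<in>S. f (Suc i) m)"
    using Suc[of "\<lambda>i. f (Suc i)"] by (simp add: sum_distrib_right[symmetric] sum_distrib_left[symmetric])
  also have "\<dots> = (\<Prod>i<Suc n. \<Sum>m\<in>S. f i m)"
    by (simp del: prod.lessThan_Suc add: prod.lessThan_Suc_shift)
  finally show ?case .
qed


lemma poly_eval_cong: "(\<And>i. i < k \<Longrightarrow> x i = y i) \<Longrightarrow> poly_eval k c x = poly_eval k c y"
  unfolding poly_eval_def by (intro sum.cong refl arg_cong2[where f="(*)"] prod.cong) auto

lemma poly_sym_cong: "(\<And>i. i < k \<Longrightarrow> x i = y i) \<Longrightarrow> poly_sym k c x = poly_sym k c y"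
  unfolding poly_sym_def
  by (intro sum.cong refl poly_eval_cong) (auto dest: permutes_in_image)

lemma poly_sym_perm: assumes "p permutes {..<k}"
  shows "poly_sym k c (\<lambda>i. x (p i)) = poly_sym k c x"
proof -
  have "poly_sym k c x = (\<Sum>\<sigma>\<in>{\<sigma>. \<sigma> permutes {..<k}}. poly_eval k c (\<lambda>i. x ((p \<circ> \<sigma>) i)))"
    unfolding poly_sym_def by (rule setum_permutations_compose_left[OF assms])
  then show ?thesis unfolding poly_sym_def by simp
qed

lemma permute_list_inv:
  assumes "p permutes {..<length t}"
  shows "permute_list (inv p) (permute_list p t) = t"
proof -
  have "inv p permutes {..<length t}" using assms by (rule permutes_inv)
  then have "permute_list (inv p) (permute_list p t) = permute_list (p \<circ> inv p) t"
    by (simp add: permute_list_compose)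
  also have "\<dots> = t" using permutes_inv_o(1)[OF assms] by simp
  finally show ?thesis .
qed

lemma permute_list_inv2:
  assumes "p permutes {..<length t}"
  shows "permute_list p (permute_list (inv p) t) = t"
proof -
  have "permute_list p (permute_list (inv p) t) = permute_list (inv p \<circ> p) t"
    using assms by (simp add: permute_list_compose)
  also have "\<dots> = t" using permutes_inv_o(2)[OF assms] by simp
  finally show ?thesis .
qed

context
  fixes n k :: nat and c :: "nat list \<Rightarrow> real" and lam \<mu> :: "nat \<Rightarrow> real"
begin

definition "TT = {t::nat list. length t = k \<and> set t \<subseteq> {..<n}}"
definition "MM t = (\<Prod>i<k. (\<mu> (t ! i))\<^sup>2)"
definition "gg t = MM t * poly_eval k c (\<lambda>i. lam (t ! i))"
definition "GG t = MM t * poly_sym k c (\<lambda>i. lam (t ! i))"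

lemma TT_finite: "finite TT"
  unfolding TT_def using finite_lists_length_eq[of "{..<n}" k] by (simp add: conj_commute)

lemma MM_perm: assumes "p permutes {..<k}" "length t = k"
  shows "MM (permute_list p t) = MM t"
proof -
  have "MM (permute_list p t) = (\<Prod>i<k. (\<mu> (t ! p i))\<^sup>2)"
    unfolding MM_def using assms by (intro prod.cong refl) (simp add: permute_list_nth)
  also have "\<dots> = MM t" unfolding MM_def
    using prod.permute[OF assms(1), where g="\<lambda>i. (\<mu> (t ! i))\<^sup>2"] by (simp add: o_def)
  finally show ?thesis .
qed

lemma GG_perm: assumes "p permutes {..<k}" "length t = k"
  shows "GG (permute_list p t) = GG t"
proof -
  have "poly_sym k c (\<lambda>i. lam (permute_list p t ! i)) = poly_sym k c (\<lambda>i. lam (t ! p i))"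
    using assms by (intro poly_sym_cong) (simp add: permute_list_nth)
  also have "\<dots> = poly_sym k c (\<lambda>i. lam (t ! i))"
    by (rule poly_sym_perm[OF assms(1), where x="\<lambda>i. lam (t ! i)"])
  finally show ?thesis unfolding GG_def using MM_perm[OF assms] by simp
qed

lemma GG_sort: assumes "length t = k" shows "GG (sort t) = GG t"
proof -
  obtain p where "p permutes {..<length t}" "permute_list p t = sort t"
    using mset_eq_permutation[of "sort t" t] by auto
  then show ?thesis using GG_perm[of p t] assms by simp
qed

lemma sum_gg_perm: assumes "p permutes {..<k}"
  shows "sum gg TT = (\<Sum>t\<in>TT. gg (permute_list p t))"
  by (rule sum.reindex_bij_witness[where j="permute_list (inv p)" and i="permute_list p"])
     (use assms in \<open>auto simp: TT_def permute_list_inv permute_list_inv2 permutes_inv\<close>)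

lemma sum_gg_GG: "fact k * sum gg TT = sum GG TT"
proof -
  have "fact k * sum gg TT = (\<Sum>\<sigma>\<in>{\<sigma>. \<sigma> permutes {..<k}}. sum gg TT)"
    by (simp add: card_permutations)
  also have "\<dots> = (\<Sum>\<sigma>\<in>{\<sigma>. \<sigma> permutes {..<k}}. \<Sum>t\<in>TT. gg (permute_list \<sigma> t))"
    by (intro sum.cong refl sum_gg_perm) simp
  also have "\<dots> = (\<Sum>t\<in>TT. \<Sum>\<sigma>\<in>{\<sigma>. \<sigma> permutes {..<k}}. gg (permute_list \<sigma> t))"
    by (rule sum.swap)
  also have "\<dots> = sum GG TT"
  proof (intro sum.cong refl)
    fix t assume t: "t \<in> TT"
    have "(\<Sum>\<sigma>\<in>{\<sigma>. \<sigma> permutes {..<k}}. gg (permute_list \<sigma> t))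
       = (\<Sum>\<sigma>\<in>{\<sigma>. \<sigma> permutes {..<k}}. MM t * poly_eval k c (\<lambda>i. lam (t ! \<sigma> i)))"
      unfolding gg_def using t
      by (intro sum.cong refl) (auto simp: TT_def MM_perm permute_list_nth intro!: poly_eval_cong arg_cong2[where f="(*)"])
    also have "\<dots> = GG t" unfolding GG_def poly_sym_def by (simp add: sum_distrib_left)
    finally show "(\<Sum>\<sigma>\<in>{\<sigma>. \<sigma> permutes {..<k}}. gg (permute_list \<sigma> t)) = GG t" .
  qed
  finally show ?thesis .
qed

definition "SS = {is::nat list. length is = k \<and> sorted is \<and> set is \<subseteq> {..<n}}"

lemma SS_finite: "finite SS"
  by (rule finite_subset[OF _ TT_finite]) (auto simp: SS_def TT_def)

lemma sum_GG_group: "sum GG TT = (\<Sum>s\<in>SS. real (card {t\<in>TT. sort t = s}) * GG s)"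
proof -
  have "sum GG TT = (\<Sum>s\<in>SS. \<Sum>t\<in>{t\<in>TT. sort t = s}. GG t)"
    by (rule sum.group[symmetric, OF TT_finite SS_finite]) (auto simp: TT_def SS_def)
  also have "\<dots> = (\<Sum>s\<in>SS. \<Sum>t\<in>{t\<in>TT. sort t = s}. GG s)"
    by (intro sum.cong refl) (auto simp: TT_def GG_sort[symmetric])
  finally show ?thesis by simp
qed

lemma card_pos: "s \<in> SS \<Longrightarrow> card {t\<in>TT. sort t = s} > 0"
proof -
  assume s: "s \<in> SS"
  have "finite {t\<in>TT. sort t = s}" using TT_finite by simp
  moreover have "s \<in> {t\<in>TT. sort t = s}" using s by (auto simp: SS_def TT_def sorted_sort_id)
  ultimately show ?thesis by (auto simp: card_gt_0_iff)
qed

end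

theorem proposition1:
  fixes n k :: nat and E :: "nat \<Rightarrow> nat \<Rightarrow> bool"
    and lam \<mu> :: "nat \<Rightarrow> real" and v :: "nat \<Rightarrow> nat \<Rightarrow> real"
    and c :: "nat list \<Rightarrow> real"
  assumes "n \<ge> 1" and "simple_graph n E"
    and lam_sorted: "\<forall>j l. j \<le> l \<longrightarrow> l < n \<longrightarrow> lam l \<le> lam j"
    and orthonormal: "\<forall>j<n. \<forall>l<n. (\<Sum>i<n. v j i * v l i) = (if j = l then 1 else 0)"
    and eigen: "\<forall>j<n. \<forall>i<n. (\<Sum>m<n. adj E i m * v j m) = lam j * v j i"
    and coords: "\<forall>i<n. (\<Sum>j<n. \<mu> j * v j i) = 1"
    and "k \<ge> 1"
    and "finite {\<alpha>. length \<alpha> = k \<and> c \<alpha> \<noteq> 0}"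
  shows "\<exists>\<gamma> :: nat list \<Rightarrow> real.
     (\<forall>is. length is = k \<and> sorted is \<and> set is \<subseteq> {..<n} \<longrightarrow> \<gamma> is > 0) \<and>
     (\<Sum>\<alpha>\<in>{\<alpha>. length \<alpha> = k \<and> c \<alpha> \<noteq> 0}. c \<alpha> * (\<Prod>i<k. real (walks n E (\<alpha> ! i)))) =
     (\<Sum>is\<in>{is. length is = k \<and> sorted is \<and> set is \<subseteq> {..<n}}.
        \<gamma> is * poly_sym k c (\<lambda>i. lam (is ! i)) * (\<Prod>i<k. (\<mu> (is ! i))\<^sup>2))"
proof -
  let ?A = "{\<alpha>. length \<alpha> = k \<and> c \<alpha> \<noteq> 0}"
  let ?T = "TT n k"
  define \<gamma> where "\<gamma> s = real (card {t\<in>?T. sort t = s}) / fact k" for s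
  have w: "real (walks n E m) = (\<Sum>j<n. (\<mu> j)\<^sup>2 * lam j ^ m)" for m
    by (rule walks_spec[OF orthonormal eigen coords])
  have "(\<Sum>\<alpha>\<in>?A. c \<alpha> * (\<Prod>i<k. real (walks n E (\<alpha> ! i))))
      = (\<Sum>\<alpha>\<in>?A. c \<alpha> * (\<Sum>t\<in>?T. \<Prod>i<k. (\<mu> (t!i))\<^sup>2 * lam (t!i) ^ (\<alpha> ! i)))"
    unfolding w TT_def
    by (intro sum.cong refl arg_cong2[where f="(*)"])
       (rule prod_sum_lists[symmetric, where f="\<lambda>i j. (\<mu> j)\<^sup>2 * lam j ^ (_ ! i)"], simp)
  also have "\<dots> = (\<Sum>\<alpha>\<in>?A. \<Sum>t\<in>?T. MM k \<mu> t * (c \<alpha> * (\<Prod>i<k. lam (t!i) ^ (\<alpha> ! i))))"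
    by (simp add: sum_distrib_left prod.distrib MM_def mult_ac)
  also have "\<dots> = (\<Sum>t\<in>?T. \<Sum>\<alpha>\<in>?A. MM k \<mu> t * (c \<alpha> * (\<Prod>i<k. lam (t!i) ^ (\<alpha> ! i))))"
    by (rule sum.swap)
  also have "\<dots> = sum (gg k c lam \<mu>) ?T"
    by (simp add: gg_def poly_eval_def sum_distrib_left)
  also have "\<dots> = sum (GG k c lam \<mu>) ?T / fact k"
    using sum_gg_GG[of k c lam \<mu> n] by (simp add: field_simps)
  also have "\<dots> = (\<Sum>s\<in>SS n k. \<gamma> s * poly_sym k c (\<lambda>i. lam (s ! i)) * (\<Prod>i<k. (\<mu> (s ! i))\<^sup>2))"
    unfolding sum_GG_group sum_divide_distrib \<gamma>_def GG_def MM_def by (simp add: mult_ac)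
  finally have eq: "(\<Sum>\<alpha>\<in>?A. c \<alpha> * (\<Prod>i<k. real (walks n E (\<alpha> ! i))))
      = (\<Sum>s\<in>SS n k. \<gamma> s * poly_sym k c (\<lambda>i. lam (s ! i)) * (\<Prod>i<k. (\<mu> (s ! i))\<^sup>2))" .
  show ?thesis
  proof (intro exI conjI allI impI)
    fix s :: "nat list" assume "length s = k \<and> sorted s \<and> set s \<subseteq> {..<n}"
    then have "s \<in> SS n k" by (simp add: SS_def)
    then show "\<gamma> s > 0" unfolding \<gamma>_def using card_pos[of s n k] by simp
  next
    show "(\<Sum>\<alpha>\<in>?A. c \<alpha> * (\<Prod>i<k. real (walks n E (\<alpha> ! i))))
      = (\<Sum>is\<in>{is. length is = k \<and> sorted is \<and> set is \<subseteq> {..<n}}.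
        \<gamma> is * poly_sym k c (\<lambda>i. lam (is ! i)) * (\<Prod>i<k. (\<mu> (is ! i))\<^sup>2))"
      using eq by (simp add: SS_def)
  qed
qed

end
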